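(* Let $\alpha,\beta,\gamma$ be nonnegative real numbers with $\gamma\neq 0$, and put $r=\beta/\gamma$, $s=\alpha/\gamma$, $t=1/\gamma$. Let $(V_n)_{n\in\mathbb{Z}}$ be the generalized Tribonacci sequence with parameters $r,s,t$ (defined in the context). Let $x_{-1},x_0$ be nonzero real numbers with $(x_{-1},x_0)\notin F$, where $$F=\bigcup_{n=-1}^{\infty}\left\{(x_{-1},x_0):\ tV_n x_{-1}x_0+(V_{n+2}-rV_{n+1})x_0+V_{n+1}=0\right\},$$ and let $(x_n)_{n\ge -1}$ be the solution of $$x_{n+1}=\frac{\gamma}{x_n(x_{n-1}+\alpha)+\beta},\qquad n=0,1,2,\dots$$ with these initial values. Then for all $n=0,1,2,\dots$, $$x_n=\frac{tV_{n-1}x_{-1}x_0+(V_{n+1}-rV_n)x_0+V_n}{tV_nx_{-1}x_0+(V_{n+2}-rV_{n+1})x_0+V_{n+1}}.$$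
   Context: The generalized Tribonacci sequence with real parameters $r,s,t$ ($t\neq 0$) is defined by $V_0=0$, $V_1=1$, $V_2=r$ and $V_{n+3}=rV_{n+2}+sV_{n+1}+tV_n$ for $n\ge 0$, and is extended to negative indices by $V_{-n}=-\frac{s}{t}V_{-(n-1)}-\frac{r}{t}V_{-(n-2)}+\frac{1}{t}V_{-(n-3)}$ for $n=1,2,3,\dots$, so that the recurrence holds for all integers $n$ (in particular $V_{-1}=0$). *)

theory Defs
  imports Complex_Main
begin

fun tribV_nat :: "real \<Rightarrow> real \<Rightarrow> real \<Rightarrow> nat \<Rightarrow> real" where
  "tribV_nat r s t 0 = 0"
| "tribV_nat r s t (Suc 0) = 1"
| "tribV_nat r s t (Suc (Suc 0)) = r"
| "tribV_nat r s t (Suc (Suc (Suc n))) =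
     r * tribV_nat r s t (Suc (Suc n)) + s * tribV_nat r s t (Suc n) + t * tribV_nat r s t n"

text \<open>Backward sequence: tribV_back r s t k = V_(2-k).\<close>
fun tribV_back :: "real \<Rightarrow> real \<Rightarrow> real \<Rightarrow> nat \<Rightarrow> real" where
  "tribV_back r s t 0 = r"
| "tribV_back r s t (Suc 0) = 1"
| "tribV_back r s t (Suc (Suc 0)) = 0"
| "tribV_back r s t (Suc (Suc (Suc k))) =
     - (s / t) * tribV_back r s t (Suc (Suc k)) - (r / t) * tribV_back r s t (Suc k)
     + (1 / t) * tribV_back r s t k"

definition tribV :: "real \<Rightarrow> real \<Rightarrow> real \<Rightarrow> int \<Rightarrow> real" where
  "tribV r s t n = (if n \<ge> 0 then tribV_nat r s t (nat n) else tribV_back r s t (nat (2 - n)))"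

definition forbidden_set :: "real \<Rightarrow> real \<Rightarrow> real \<Rightarrow> (real \<times> real) set" where
  "forbidden_set r s t = (\<Union>n\<in>{-1::int..}. {(a, b). t * tribV r s t n * a * b
      + (tribV r s t (n + 2) - r * tribV r s t (n + 1)) * b + tribV r s t (n + 1) = 0})"

end

theory Submission
  imports Defs
begin

lemma V_low: "n \<le> 2 \<Longrightarrow> tribV r s t n = tribV_back r s t (nat (2 - n))"
proof (cases "n < 0")
  case True then show ?thesis by (simp add: tribV_def)
next
  case False
  assume "n \<le> 2"
  with False have "n = 0 \<or> n = 1 \<or> n = 2" by arith
  then show ?thesis by (auto simp add: tribV_def numeral_2_eq_2)
qed

lemma V_rec:
  assumes "t \<noteq> 0"
  shows "tribV r s t (n+3) = r*tribV r s t (n+2) + s*tribV r s t (n+1) + t*tribV r s t n"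
proof (cases "n \<ge> 0")
  case True
  then obtain m where m: "n = int m" by (metis nonneg_eq_int)
  have "nat (int m + 3) = Suc (Suc (Suc m))" "nat (int m + 2) = Suc (Suc m)"
    "nat (int m + 1) = Suc m" by auto
  then show ?thesis using m by (simp add: tribV_def)
next
  case False
  define k where "k = nat (-1 - n)"
  have e: "nat (2 - n) = Suc (Suc (Suc k))" "nat (2 - (n+1)) = Suc (Suc k)"
    "nat (2 - (n+2)) = Suc k" "nat (2 - (n+3)) = k" using False by (auto simp: k_def)
  have "tribV r s t n = tribV_back r s t (Suc (Suc (Suc k)))"
    using V_low[of n] False e by simp
  moreover have "tribV r s t (n+1) = tribV_back r s t (Suc (Suc k))"
    using V_low[of "n+1"] False e by simp
  moreover have "tribV r s t (n+2) = tribV_back r s t (Suc k)"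
    using V_low[of "n+2"] False e by simp
  moreover have "tribV r s t (n+3) = tribV_back r s t k"
    using V_low[of "n+3"] False e by simp
  ultimately show ?thesis using assms
    by (simp del: tribV_back.simps add: tribV_back.simps(4) field_simps)
qed

theorem mainTheorem1:
  fixes \<alpha> \<beta> \<gamma> r s t :: real and x :: "int \<Rightarrow> real"
  assumes "\<alpha> \<ge> 0" and "\<beta> \<ge> 0" and "\<gamma> \<ge> 0" and "\<gamma> \<noteq> 0"
    and "r = \<beta> / \<gamma>" and "s = \<alpha> / \<gamma>" and "t = 1 / \<gamma>"
    and "x (-1) \<noteq> 0" and "x 0 \<noteq> 0"
    and "(x (-1), x 0) \<notin> forbidden_set r s t"
    and "\<And>n::int. n \<ge> 0 \<Longrightarrow> x (n + 1) = \<gamma> / (x n * (x (n - 1) + \<alpha>) + \<beta>)"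
  shows "\<forall>n::int. n \<ge> 0 \<longrightarrow> x n =
    (t * tribV r s t (n - 1) * x (-1) * x 0 + (tribV r s t (n + 1) - r * tribV r s t n) * x 0 + tribV r s t n)
    / (t * tribV r s t n * x (-1) * x 0 + (tribV r s t (n + 2) - r * tribV r s t (n + 1)) * x 0 + tribV r s t (n + 1))"
proof -
  define a where "a = x (-1)"
  define b where "b = x 0"
  define V where "V = tribV r s t"
  define N where "N n = t * V (n - 1) * a * b + (V (n + 1) - r * V n) * b + V n" for n
  have t0: "t \<noteq> 0" using assms by simp
  have Vr: "V (n+3) = r * V (n+2) + s * V (n+1) + t * V n" for n
    unfolding V_def using V_rec[OF t0] .
  have V0: "V 0 = 0" and V1: "V 1 = 1" and V2: "V 2 = r"
    by (simp_all add: V_def tribV_def numeral_2_eq_2)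
  have Vm1: "V (-1) = 0" using Vr[of "-1"] V0 V1 V2 t0 by simp
  have Vm2: "V (-2) = 1 / t" using Vr[of "-2"] V0 V1 Vm1 t0 by (simp add: field_simps)
  have Nr: "N (n+3) = r * N (n+2) + s * N (n+1) + t * N n" for n
  proof -
    have A: "V (n+2) = r * V (n+1) + s * V n + t * V (n - 1)" using Vr[of "n-1"]
      by (simp add: ac_simps numeral_3_eq_3 numeral_2_eq_2)
    have B: "V (n+4) = r * V (n+3) + s * V (n+2) + t * V (n + 1)" using Vr[of "n+1"]
      by (simp add: add.assoc)
    show ?thesis unfolding N_def using Vr[of n] A B
      by (simp add: algebra_simps add.assoc)
  qed
  have Nm1: "N (-1) = a * b" unfolding N_def using Vm2 V0 Vm1 t0 by simp
  have N0: "N 0 = b" unfolding N_def using Vm1 V0 V1 by simp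
  have N1: "N 1 = 1" unfolding N_def using V0 V1 V2 by simp
  have Nnz: "N m \<noteq> 0" if "m \<ge> 0" for m
  proof
    assume "N m = 0"
    then have "(a, b) \<in> forbidden_set r s t"
      unfolding forbidden_set_def using that
      by (auto intro!: bexI[of _ "m - 1"] simp: N_def V_def add.commute)
    then show False using assms(10) a_def b_def by simp
  qed
  have rec: "\<gamma> * N (n+2) = \<beta> * N (n+1) + \<alpha> * N n + N (n - 1)" for n
    using Nr[of "n-1"] assms(4-7) by (simp add: field_simps)
  have P: "x (int k - 1) = N (int k - 1) / N (int k) \<and> x (int k) = N (int k) / N (int k + 1)" for k
  proof (induction k)
    case 0
    then show ?case using Nm1 N0 N1 a_def b_def assms(9) by simp
  next
    case (Suc k)
    let ?n = "int k"
    have h1: "x ?n = N ?n / N (?n+1)" and h2: "x (?n - 1) = N (?n - 1) / N ?n" using Suc by auto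
    have z0: "N ?n \<noteq> 0" and z1: "N (?n+1) \<noteq> 0" and z2: "N (?n+2) \<noteq> 0"
      using Nnz by auto
    have "x ?n * (x (?n - 1) + \<alpha>) + \<beta> = (N (?n-1) + \<alpha> * N ?n + \<beta> * N (?n+1)) / N (?n+1)"
      unfolding h1 h2 using z0 z1 by (simp add: field_simps)
    also have "\<dots> = \<gamma> * N (?n+2) / N (?n+1)" using rec[of ?n] by (simp add: algebra_simps)
    finally have "x (?n+1) = N (?n+1) / N (?n+2)"
      using assms(11)[of ?n] z1 z2 assms(4) by simp
    then show ?case using h1 by (simp add: add.commute add.left_commute)
  qed
  show ?thesis
  proof (intro allI impI)
    fix n :: int assume "n \<ge> 0"
    then obtain k where "n = int k" by (metis nonneg_eq_int)
    then have "x n = N n / N (n+1)" using P[of k] by simp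
    then show "x n =
    (t * tribV r s t (n - 1) * x (-1) * x 0 + (tribV r s t (n + 1) - r * tribV r s t n) * x 0 + tribV r s t n)
    / (t * tribV r s t n * x (-1) * x 0 + (tribV r s t (n + 2) - r * tribV r s t (n + 1)) * x 0 + tribV r s t (n + 1))"
      by (simp add: N_def V_def a_def b_def add.assoc)
  qed
qed

end
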